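(* Let $p\equiv1\pmod4$ be a prime. Let $S\subset\mathbb{P}^5$ be the surface over $\mathbb{F}_p$ defined by $x_1^2-x_2^2=x_3^2$, $x_0^2-x_1^2=x_4^2$, $x_0^2-x_2^2=x_5^2$, and let $X\subset\mathbb{A}^3$ be the affine surface over $\mathbb{F}_p$ given by $z^2=(x^2y^2+1)(x^2+y^2)$. Then $$|S(\mathbb{F}_p)|=|X(\mathbb{F}_p)|-1.$$ *)

theory Defs
  imports "HOL-Number_Theory.Number_Theory"
begin

text \<open>The prime field F_p is modelled by the residues {0..p-1} with arithmetic mod p.\<close>

definition Fp :: "nat \<Rightarrow> int set" where
  "Fp p = {0..<int p}"

definition X_points :: "nat \<Rightarrow> (int \<times> int \<times> int) set" where
  "X_points p = {(x, y, z). x \<in> Fp p \<and> y \<in> Fp p \<and> z \<in> Fp p \<and>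
      [z^2 = (x^2 * y^2 + 1) * (x^2 + y^2)] (mod int p)}"

text \<open>A point of P^5(F_p) is the class of a nonzero vector in F_p^6 under scaling
  by nonzero scalars; vectors are lists of length 6 with entries in F_p.\<close>
definition scale_vec :: "nat \<Rightarrow> int \<Rightarrow> int list \<Rightarrow> int list" where
  "scale_vec p c v = map (\<lambda>a. (c * a) mod int p) v"

definition proj_class :: "nat \<Rightarrow> int list \<Rightarrow> int list set" where
  "proj_class p v = {scale_vec p c v | c. c \<in> Fp p \<and> c \<noteq> 0}"

definition S_affine_cone :: "nat \<Rightarrow> int list set" where
  "S_affine_cone p = {v. length v = 6 \<and> set v \<subseteq> Fp p \<and> v \<noteq> replicate 6 0 \<and>
      [v!1^2 - v!2^2 = v!3^2] (mod int p) \<and>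
      [v!0^2 - v!1^2 = v!4^2] (mod int p) \<and>
      [v!0^2 - v!2^2 = v!5^2] (mod int p)}"

definition S_points :: "nat \<Rightarrow> int list set set" where
  "S_points p = proj_class p ` S_affine_cone p"

end

theory Submission
  imports Defs
begin

locale pc =
  fixes p :: nat
  assumes pp: "prime p" and p4: "p mod 4 = 1"
begin

abbreviation P where "P \<equiv> int p"

definition Fs where "Fs = Fp p - {0}"

lemma p_ge5: "p \<ge> 5"
proof -
  have "p \<ge> 2" using pp prime_ge_2_nat by blast
  moreover have "p \<noteq> 2" "p \<noteq> 3" "p \<noteq> 4" using p4 by auto
  ultimately show ?thesis using p4 by presburger
qed

lemma primeP: "prime P" using pp by simp

lemma ndvd_mult: "\<not> P dvd a \<Longrightarrow> \<not> P dvd b \<Longrightarrow> \<not> P dvd (a*b)"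
  using prime_dvd_mult_iff[OF primeP] by blast

lemma ndvd_2: "\<not> P dvd 2"
proof
  assume "P dvd 2"
  then have "P \<le> 2" by (rule zdvd_imp_le) simp
  then show False using p_ge5 by simp
qed

lemma coprimeP: "\<not> P dvd c \<Longrightarrow> coprime c P"
  using prime_imp_coprime[OF primeP] by (simp add: coprime_commute)

lemma cancel: "\<not> P dvd c \<Longrightarrow> [c*x = c*y] (mod P) \<Longrightarrow> [x = y] (mod P)"
  using cong_mult_lcancel coprimeP by blast

lemma F_mem: "x \<in> Fp p \<longleftrightarrow> 0 \<le> x \<and> x < P" by (simp add: Fp_def)

lemma F_eq: "x \<in> Fp p \<Longrightarrow> y \<in> Fp p \<Longrightarrow> [x = y] (mod P) \<Longrightarrow> x = y"
  using cong_less_imp_eq_int by (auto simp: F_mem)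

lemma F_mod: "x mod P \<in> Fp p" using p_ge5 by (simp add: F_mem)

lemma F_mod_id: "x \<in> Fp p \<Longrightarrow> x mod P = x" by (simp add: F_mem)

lemma F_dvd: "x \<in> Fp p \<Longrightarrow> P dvd x \<Longrightarrow> x = 0"
  using F_mod_id by fastforce

lemma Fs_mem: "x \<in> Fs \<longleftrightarrow> x \<in> Fp p \<and> x \<noteq> 0" by (simp add: Fs_def)

lemma Fs_ndvd: "x \<in> Fs \<Longrightarrow> \<not> P dvd x" using F_dvd Fs_mem by blast

lemma zero_F: "0 \<in> Fp p" using p_ge5 by (simp add: F_mem)

lemma fin_F: "finite (Fp p)" by (simp add: Fp_def)
lemma fin_Fs: "finite Fs" by (simp add: Fs_def fin_F)

lemma card_F: "card (Fp p) = p" by (simp add: Fp_def)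
lemma card_Fs: "card Fs = p - 1" using zero_F fin_F card_F by (simp add: Fs_def)

lemma inv_ex: "\<not> P dvd s \<Longrightarrow> \<exists>s'. [s*s' = 1] (mod P)"
  using cong_solve_coprime_int coprimeP by blast

lemma sqrt_m1: "\<exists>i. [i^2 = -1] (mod P)"
proof -
  have e: "[Legendre (-1) P = (-1) ^ ((p - 1) div 2)] (mod P)"
    using euler_criterion[OF pp] p_ge5 by simp
  have "even ((p - 1) div 2)" using p4 by presburger
  then have "((-1::int) ^ ((p - 1) div 2)) = 1" by simp
  with e have e1: "[Legendre (-1) P = 1] (mod P)" by simp
  have "QuadRes P (-1)"
  proof (rule ccontr)
    assume nq: "\<not> QuadRes P (-1)"
    have "Legendre (-1) P = 0 \<or> Legendre (-1) P = -1" using nq by (simp add: Legendre_def)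
    then have "[0 = 1] (mod P) \<or> [-1 = 1] (mod P)" using e1 by auto
    then have "P dvd 1 \<or> P dvd 2"
      by (auto simp: cong_iff_dvd_diff dvd_diff_commute)
    then show False using ndvd_2 p_ge5 by auto
  qed
  then show ?thesis by (simp add: QuadRes_def)
qed

definition ii where "ii = (SOME i. [i^2 = -1] (mod P))"

lemma ii: "[ii^2 = -1] (mod P)"
  unfolding ii_def using sqrt_m1 by (rule someI_ex)

lemma ii_ndvd: "\<not> P dvd ii"
proof
  assume "P dvd ii"
  then have "[ii = 0] (mod P)" by (simp add: cong_0_iff)
  then have "[ii^2 = 0^2] (mod P)" by (rule cong_pow)
  then have "[-1 = 0] (mod P)" using ii by (metis cong_sym cong_trans power_zero_numeral)
  then show False using p_ge5 by (simp add: cong_iff_dvd_diff)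
qed

definition R where "R m = {z \<in> Fp p. [z^2 = m] (mod P)}"
definition rho where "rho m = card (R m)"

lemma fin_R: "finite (R m)" by (simp add: R_def fin_F)
lemma R_sub: "R m \<subseteq> Fp p" by (auto simp: R_def)

lemma rho_cong: "[m = m'] (mod P) \<Longrightarrow> rho m = rho m'"
  unfolding rho_def R_def by (metis (no_types, lifting) Collect_cong cong_sym cong_trans)

lemma rho_le: assumes "\<not> P dvd w" shows "rho m \<le> rho (w^2*m)"
  unfolding rho_def
proof (rule card_inj_on_le[where f="\<lambda>z. (w*z) mod P"])
  show "inj_on (\<lambda>z. w * z mod P) (R m)"
  proof (rule inj_onI)
    fix x y assume xy: "x \<in> R m" "y \<in> R m" "w * x mod P = w * y mod P"
    then have "[w*x = w*y] (mod P)" by (simp add: cong_def)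
    then have "[x = y] (mod P)" using cancel assms by blast
    then show "x = y" using F_eq xy R_sub by blast
  qed
  show "(\<lambda>z. w * z mod P) ` R m \<subseteq> R (w\<^sup>2 * m)"
  proof
    fix y assume "y \<in> (\<lambda>z. w * z mod P) ` R m"
    then obtain z where z: "z \<in> R m" "y = w*z mod P" by blast
    have "[(w*z mod P)^2 = (w*z)^2] (mod P)" by (intro cong_pow) simp
    also have "(w*z)^2 = w^2*z^2" by (simp add: power_mult_distrib)
    also have "[w^2*z^2 = w^2*m] (mod P)" using z by (intro cong_mult cong_refl) (simp add: R_def)
    finally show "y \<in> R (w^2*m)" using z F_mod by (simp add: R_def)
  qed
  show "finite (R (w\<^sup>2 * m))" by (rule fin_R)
qed

lemma rho_scale: assumes "\<not> P dvd w" shows "rho (w^2*m) = rho m"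
proof -
  obtain w' where w': "[w*w' = 1] (mod P)" using inv_ex assms by blast
  have nd: "\<not> P dvd w'"
  proof
    assume "P dvd w'"
    then have "P dvd w*w'" by simp
    then have "[w*w' = 0] (mod P)" by (simp add: cong_0_iff)
    then have "[1 = 0] (mod P)" using w' by (metis cong_sym cong_trans)
    then show False using p_ge5 by (simp add: cong_iff_dvd_diff)
  qed
  have "w'^2*(w^2*m) = (w*w')^2*m" by (simp add: power_mult_distrib algebra_simps)
  moreover have "[(w*w')^2*m = 1^2*m] (mod P)" using w' by (intro cong_mult cong_pow cong_refl)
  ultimately have "[w'^2*(w^2*m) = m] (mod P)" by (metis mult_1 power_one)
  then have "rho (w'^2*(w^2*m)) = rho m" by (rule rho_cong)
  then show ?thesis using rho_le[OF assms, of m] rho_le[OF nd, of "w^2*m"] by simp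
qed

lemma rho_neg: "rho (-m) = rho m"
proof -
  have "[ii^2 * m = (-1)*m] (mod P)" using ii by (intro cong_mult cong_refl)
  then have "rho (ii^2*m) = rho (-m)" by (simp add: rho_cong)
  then show ?thesis using rho_scale[OF ii_ndvd] by simp
qed

lemma rho0: "rho 0 = 1"
proof -
  have "R 0 = {0}"
  proof
    show "R 0 \<subseteq> {0}"
    proof
      fix z assume z: "z \<in> R 0"
      then have "P dvd z^2" by (simp add: R_def cong_0_iff)
      then have "P dvd z" using primeP prime_dvd_power by blast
      then show "z \<in> {0}" using z R_sub F_dvd by blast
    qed
    show "{0} \<subseteq> R 0" using zero_F by (simp add: R_def)
  qed
  then show ?thesis by (simp add: rho_def)
qed

lemma rho_sq: assumes "\<not> P dvd b" shows "rho (b^2) = 2"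
proof -
  have "R (b^2) = {b mod P, (-b) mod P}"
  proof
    show "R (b^2) \<subseteq> {b mod P, (-b) mod P}"
    proof
      fix z assume z: "z \<in> R (b^2)"
      then have "P dvd z^2 - b^2" by (simp add: R_def cong_iff_dvd_diff)
      moreover have "z^2 - b^2 = (z - b)*(z - (-b))" by (simp add: power2_eq_square algebra_simps)
      ultimately have "P dvd (z - b) \<or> P dvd (z - (-b))" using prime_dvd_mult_iff[OF primeP] by simp
      then have "[z = b] (mod P) \<or> [z = -b] (mod P)" by (simp add: cong_iff_dvd_diff)
      then have "[z = b mod P] (mod P) \<or> [z = (-b) mod P] (mod P)"
        by (metis cong_mod_right)
      then show "z \<in> {b mod P, (-b) mod P}" using F_eq F_mod z R_sub by blast
    qed
    show "{b mod P, (-b) mod P} \<subseteq> R (b^2)"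
    proof -
      have "[(b mod P)^2 = b^2] (mod P)" by (intro cong_pow) simp
      moreover have "[((-b) mod P)^2 = (-b)^2] (mod P)" by (intro cong_pow) simp
      ultimately show ?thesis using F_mod by (simp add: R_def)
    qed
  qed
  moreover have "b mod P \<noteq> (-b) mod P"
  proof
    assume "b mod P = (-b) mod P"
    then have "[b = -b] (mod P)" by (simp add: cong_def)
    then have "P dvd 2*b" by (simp add: cong_iff_dvd_diff)
    then show False using ndvd_mult[OF ndvd_2 assms] by simp
  qed
  ultimately show ?thesis by (simp add: rho_def)
qed

lemma rho1: "rho 1 = 2" using rho_sq[of 1] p_ge5 by simp

lemma cong_dvd: "[x = y] (mod P) \<longleftrightarrow> P dvd x - y" by (simp add: cong_iff_dvd_diff)

lemma mod_dvd: "P dvd x mod P - x"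
  by (metis cong_iff_dvd_diff cong_mod_left cong_refl)

lemma sum_F_split: "(\<Sum>x\<in>Fp p. f x) = f 0 + (\<Sum>x\<in>Fs. f x)"
  unfolding Fs_def using sum.remove[OF fin_F zero_F] by simp

lemma mul_inj: assumes "\<not> P dvd c" "A \<subseteq> Fp p" shows "inj_on (\<lambda>x. (c*x) mod P) A"
proof (rule inj_onI)
  fix x y assume xy: "x \<in> A" "y \<in> A" "c * x mod P = c * y mod P"
  then have "[c*x = c*y] (mod P)" by (simp add: cong_def)
  then have "[x = y] (mod P)" using cancel assms by blast
  then show "x = y" using F_eq xy assms by blast
qed

lemma mul_img_F: assumes "\<not> P dvd c" shows "(\<lambda>x. (c*x) mod P) ` Fp p = Fp p"
  using endo_inj_surj[OF fin_F _ mul_inj[OF assms]] F_mod by blast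

lemma mul_img_Fs: assumes "\<not> P dvd c" shows "(\<lambda>x. (c*x) mod P) ` Fs = Fs"
proof (rule endo_inj_surj[OF fin_Fs])
  show "(\<lambda>x. c * x mod P) ` Fs \<subseteq> Fs"
  proof
    fix y assume "y \<in> (\<lambda>x. c * x mod P) ` Fs"
    then obtain x where x: "x \<in> Fs" "y = c*x mod P" by blast
    have "\<not> P dvd c*x" using ndvd_mult[OF assms Fs_ndvd[OF x(1)]] .
    then have "y \<noteq> 0" using x by auto
    then show "y \<in> Fs" using x F_mod Fs_mem by simp
  qed
  show "inj_on (\<lambda>x. c * x mod P) Fs" using mul_inj[OF assms] Fs_def by blast
qed

lemma sum_reF: assumes "\<not> P dvd c" shows "(\<Sum>x\<in>Fp p. f x) = (\<Sum>x\<in>Fp p. f ((c*x) mod P))"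
proof -
  have "(\<Sum>x\<in>Fp p. f x) = sum f ((\<lambda>x. (c*x) mod P) ` Fp p)" using mul_img_F[OF assms] by simp
  also have "\<dots> = (\<Sum>x\<in>Fp p. f ((c*x) mod P))"
    using sum.reindex[OF mul_inj[OF assms], of "Fp p" f] by simp
  finally show ?thesis .
qed

lemma sum_reFs: assumes "\<not> P dvd c" shows "(\<Sum>x\<in>Fs. f x) = (\<Sum>x\<in>Fs. f ((c*x) mod P))"
proof -
  have "(\<Sum>x\<in>Fs. f x) = sum f ((\<lambda>x. (c*x) mod P) ` Fs)" using mul_img_Fs[OF assms] by simp
  also have "\<dots> = (\<Sum>x\<in>Fs. f ((c*x) mod P))"
    using sum.reindex[OF mul_inj[OF assms], of Fs f] Fs_def by auto
  finally show ?thesis .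
qed

definition g where "g x0 x1 x2 = rho (x1^2 - x2^2) * rho (x0^2 - x1^2) * rho (x0^2 - x2^2)"

lemma rho_hom2: assumes "\<not> P dvd c" shows "rho ((c*a)^2 - (c*b)^2) = rho (a^2 - b^2)"
proof -
  have "(c*a)^2 - (c*b)^2 = c^2 * (a^2 - b^2)" by (simp add: power_mult_distrib algebra_simps)
  then show ?thesis using rho_scale[OF assms] by simp
qed

lemma g_hom: "\<not> P dvd c \<Longrightarrow> g (c*x0) (c*x1) (c*x2) = g x0 x1 x2"
  unfolding g_def using rho_hom2 by simp

lemma rho_mod2: "rho ((a mod P)^2 - (b mod P)^2) = rho (a^2 - b^2)"
  by (rule rho_cong) (intro cong_diff cong_pow; simp)

lemma g_mod: "g (a mod P) (b mod P) (d mod P) = g a b d"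
  unfolding g_def rho_mod2 ..

lemma inner1: assumes x0: "x0 \<in> Fs"
  shows "(\<Sum>x1\<in>Fp p. \<Sum>x2\<in>Fp p. g x0 x1 x2) = (\<Sum>a\<in>Fp p. \<Sum>b\<in>Fp p. g 1 a b)"
proof -
  have nd: "\<not> P dvd x0" using Fs_ndvd[OF x0] .
  have "(\<Sum>x1\<in>Fp p. \<Sum>x2\<in>Fp p. g x0 x1 x2) = (\<Sum>x1\<in>Fp p. \<Sum>b\<in>Fp p. g x0 x1 ((x0*b) mod P))"
    by (rule sum.cong[OF refl], rule sum_reF[OF nd])
  also have "\<dots> = (\<Sum>a\<in>Fp p. \<Sum>b\<in>Fp p. g x0 ((x0*a) mod P) ((x0*b) mod P))"
    by (rule sum_reF[OF nd])
  also have "\<dots> = (\<Sum>a\<in>Fp p. \<Sum>b\<in>Fp p. g 1 a b)"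
  proof (intro sum.cong refl)
    fix a b
    have "x0 mod P = x0" using x0 F_mod_id Fs_mem by blast
    then have "g x0 ((x0*a) mod P) ((x0*b) mod P) = g (x0*1) (x0*a) (x0*b)"
      using g_mod[of x0 "x0*a" "x0*b"] by simp
    also have "\<dots> = g 1 a b" by (rule g_hom[OF nd])
    finally show "g x0 ((x0*a) mod P) ((x0*b) mod P) = g 1 a b" .
  qed
  finally show ?thesis .
qed

lemma inner0: assumes x1: "x1 \<in> Fs"
  shows "(\<Sum>x2\<in>Fp p. g 0 x1 x2) = (\<Sum>b\<in>Fp p. g 0 1 b)"
proof -
  have nd: "\<not> P dvd x1" using Fs_ndvd[OF x1] .
  have "(\<Sum>x2\<in>Fp p. g 0 x1 x2) = (\<Sum>b\<in>Fp p. g 0 x1 ((x1*b) mod P))"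
    by (rule sum_reF[OF nd])
  also have "\<dots> = (\<Sum>b\<in>Fp p. g 0 1 b)"
  proof (intro sum.cong refl)
    fix b
    have "x1 mod P = x1" using x1 F_mod_id Fs_mem by blast
    then have "g 0 x1 ((x1*b) mod P) = g (x1*0) (x1*1) (x1*b)"
      using g_mod[of 0 x1 "x1*b"] by simp
    also have "\<dots> = g 0 1 b" by (rule g_hom[OF nd])
    finally show "g 0 x1 ((x1*b) mod P) = g 0 1 b" .
  qed
  finally show ?thesis .
qed

lemma rho_sqF: "b \<in> Fs \<Longrightarrow> rho (b^2) = 2" using rho_sq Fs_ndvd by blast
lemma rho_nsqF: "b \<in> Fs \<Longrightarrow> rho (-(b^2)) = 2" using rho_sqF rho_neg by simp

lemma g000: "g 0 0 0 = 1" by (simp add: g_def rho0)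
lemma g00: "x \<in> Fs \<Longrightarrow> g 0 0 x = 4" by (simp add: g_def rho0 rho_nsqF)

definition N where "N = (\<Sum>x0\<in>Fp p. \<Sum>x1\<in>Fp p. \<Sum>x2\<in>Fp p. g x0 x1 x2)"
definition G1 where "G1 = (\<Sum>a\<in>Fp p. \<Sum>b\<in>Fp p. g 1 a b)"
definition G2 where "G2 = (\<Sum>b\<in>Fp p. g 0 1 b)"

lemma N_decomp: "N = 1 + (p - 1) * 4 + (p - 1) * G2 + (p - 1) * G1"
proof -
  have "N = (\<Sum>x1\<in>Fp p. \<Sum>x2\<in>Fp p. g 0 x1 x2) + (\<Sum>x0\<in>Fs. \<Sum>x1\<in>Fp p. \<Sum>x2\<in>Fp p. g x0 x1 x2)"
    unfolding N_def by (rule sum_F_split)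
  also have "(\<Sum>x0\<in>Fs. \<Sum>x1\<in>Fp p. \<Sum>x2\<in>Fp p. g x0 x1 x2) = (\<Sum>x0\<in>Fs. G1)"
    unfolding G1_def using inner1 by (rule sum.cong[OF refl])
  also have "(\<Sum>x1\<in>Fp p. \<Sum>x2\<in>Fp p. g 0 x1 x2) = (\<Sum>x2\<in>Fp p. g 0 0 x2) + (\<Sum>x1\<in>Fs. \<Sum>x2\<in>Fp p. g 0 x1 x2)"
    by (rule sum_F_split)
  also have "(\<Sum>x1\<in>Fs. \<Sum>x2\<in>Fp p. g 0 x1 x2) = (\<Sum>x1\<in>Fs. G2)"
    unfolding G2_def using inner0 by (rule sum.cong[OF refl])
  also have "(\<Sum>x2\<in>Fp p. g 0 0 x2) = g 0 0 0 + (\<Sum>x2\<in>Fs. g 0 0 x2)"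
    by (rule sum_F_split)
  also have "(\<Sum>x2\<in>Fs. g 0 0 x2) = (\<Sum>x2\<in>Fs. 4)" using g00 by (rule sum.cong[OF refl])
  finally show ?thesis using g000 card_Fs by simp
qed

lemma G2_eq: "G2 = 4 + 4 * (\<Sum>b\<in>Fs. rho (1 - b^2))"
proof -
  have "G2 = g 0 1 0 + (\<Sum>b\<in>Fs. g 0 1 b)" unfolding G2_def by (rule sum_F_split)
  also have "g 0 1 0 = 4" using rho1 rho_neg[of 1] by (simp add: g_def rho0)
  also have "(\<Sum>b\<in>Fs. g 0 1 b) = (\<Sum>b\<in>Fs. 4 * rho (1 - b^2))"
  proof (rule sum.cong[OF refl])
    fix b assume "b \<in> Fs"
    then show "g 0 1 b = 4 * rho (1 - b^2)" using rho1 rho_neg[of 1] rho_nsqF by (simp add: g_def)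
  qed
  finally show ?thesis by (simp add: sum_distrib_left)
qed

definition C where "C = Sigma (Fp p) (\<lambda>a. R (1 - a^2))"

lemma fin_C: "finite C" unfolding C_def using fin_F fin_R by simp

lemma C_D: assumes "(a, d) \<in> C" shows "a \<in> Fp p \<and> d \<in> Fp p \<and> P dvd (a^2 + d^2 - 1)"
proof -
  have h: "a \<in> Fp p" "d \<in> Fp p" "[d^2 = 1 - a^2] (mod P)" using assms by (auto simp: C_def R_def)
  from h(3) have "P dvd d^2 - (1 - a^2)" by (simp only: cong_dvd)
  moreover have "d^2 - (1 - a^2) = a^2 + d^2 - 1" by simp
  ultimately have "P dvd a^2 + d^2 - 1" by (simp only:)
  with h show ?thesis by blast
qed

lemma E_dvd: "P dvd (ii^2 + 1)" using ii by (simp add: cong_dvd)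

lemma sum_C: "(\<Sum>a\<in>Fp p. rho (1 - a^2) * f a) = (\<Sum>u\<in>C. f (fst u))"
proof -
  have "(\<Sum>u\<in>C. f (fst u)) = (\<Sum>a\<in>Fp p. \<Sum>d\<in>R (1 - a^2). f a)"
    unfolding C_def using sum.Sigma[OF fin_F, of "\<lambda>a. R (1 - a^2)" "\<lambda>a d. f a"] fin_R
    by (simp add: split_def)
  also have "\<dots> = (\<Sum>a\<in>Fp p. rho (1 - a^2) * f a)" by (simp add: rho_def)
  finally show ?thesis by simp
qed

lemma card_C_sum: "card C = (\<Sum>a\<in>Fp p. rho (1 - a^2))"
  unfolding C_def rho_def using fin_F fin_R by (simp add: card_SigmaI)

definition psi where "psi u = (fst u + ii * snd u) mod P"

lemma s_unit: assumes "(a, d) \<in> C" shows "P dvd (a + ii*d)*(a - ii*d) - 1"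
proof -
  have eq_u: "(a + ii*d)*(a - ii*d) - 1 = (a^2 + d^2 - 1) - (ii^2+1)*d^2"
    by (simp add: algebra_simps power2_eq_square power4_eq_xxxx)
  then show ?thesis by (subst eq_u) (rule dvd_diff[OF conjunct2[OF conjunct2[OF C_D[OF assms]]] dvd_mult2[OF E_dvd]])
qed

lemma s_ndvd: assumes "(a, d) \<in> C" shows "\<not> P dvd (a + ii*d)"
proof
  assume "P dvd (a + ii*d)"
  then have "P dvd (a + ii*d)*(a - ii*d)" by simp
  from dvd_diff[OF this s_unit[OF assms]] show False using p_ge5 by simp
qed

lemma psi_Fs: "u \<in> C \<Longrightarrow> psi u \<in> Fs"
proof -
  assume u: "u \<in> C"
  obtain a d where ad: "u = (a, d)" by fastforce
  have "psi u \<noteq> 0" using s_ndvd[OF u[unfolded ad]] by (auto simp: psi_def ad)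
  then show ?thesis using F_mod Fs_mem psi_def by simp
qed

lemma psi_inj: "inj_on psi C"
proof (rule inj_onI)
  fix u v assume u: "u \<in> C" and v: "v \<in> C" and eq: "psi u = psi v"
  obtain a d where ad: "u = (a, d)" by fastforce
  obtain b e where be: "v = (b, e)" by fastforce
  note uC = u[unfolded ad] and vC = v[unfolded be]
  define s where "s = a + ii*d"
  define t where "t = b + ii*e"
  have st: "P dvd s - t" using eq by (simp add: psi_def ad be s_def t_def mod_eq_dvd_iff)
  define X where "X = (a - ii*d) - (b - ii*e)"
  have sX: "s * X = (s*(a - ii*d) - 1) - (t*(b - ii*e) - 1) - (s - t)*(b - ii*e)"
    unfolding X_def by (simp add: algebra_simps power2_eq_square power4_eq_xxxx)
  have U: "P dvd s*(a - ii*d) - 1" unfolding s_def by (rule s_unit[OF uC])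
  have V: "P dvd t*(b - ii*e) - 1" unfolding t_def by (rule s_unit[OF vC])
  have "P dvd s * X" unfolding sX by (rule dvd_diff[OF dvd_diff[OF U V] dvd_mult2[OF st]])
  then have X: "P dvd X" using s_ndvd[OF uC] prime_dvd_mult_iff[OF primeP] s_def by blast
  have e2: "2*(a - b) = (s - t) + X" unfolding s_def t_def X_def by (simp add: algebra_simps power2_eq_square power4_eq_xxxx)
  have "P dvd 2*(a-b)" unfolding e2 by (rule dvd_add[OF st X])
  then have "P dvd a - b" using prime_dvd_mult_iff[OF primeP] ndvd_2 by blast
  then have "[a = b] (mod P)" by (simp only: cong_dvd)
  then have ab: "a = b" using F_eq C_D[OF uC] C_D[OF vC] by blast
  have e3: "(2*ii)*(d - e) = (s - t) - X" unfolding s_def t_def X_def by (simp add: algebra_simps power2_eq_square power4_eq_xxxx)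
  have "P dvd (2*ii)*(d-e)" unfolding e3 by (rule dvd_diff[OF st X])
  then have "P dvd d - e" using prime_dvd_mult_iff[OF primeP] ndvd_mult[OF ndvd_2 ii_ndvd] by blast
  then have "[d = e] (mod P)" by (simp only: cong_dvd)
  then have "d = e" using F_eq C_D[OF uC] C_D[OF vC] by blast
  then show "u = v" using ab ad be by simp
qed

lemma psi_surj: assumes s: "s \<in> Fs" shows "s \<in> psi ` C"
proof -
  obtain s' where s': "[s*s' = 1] (mod P)" using inv_ex Fs_ndvd[OF s] by blast
  obtain h where h: "[2*h = 1] (mod P)" using inv_ex ndvd_2 by blast
  define a0 where "a0 = (s + s')*h"
  define d0 where "d0 = (s' - s)*h*ii"
  define a where "a = a0 mod P"
  define d where "d = d0 mod P"
  have D1: "P dvd s*s' - 1" "P dvd 2*h - 1" using s' h by (simp_all add: cong_dvd)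
  have e1: "d0^2 + a0^2 - 1 = h^2*(s'-s)^2*(ii^2+1) + 4*h^2*(s*s'-1) + (2*h-1)*(2*h+1)"
    unfolding a0_def d0_def by (simp add: algebra_simps power2_eq_square power4_eq_xxxx)
  have dd0: "P dvd d0^2 + a0^2 - 1" unfolding e1
    by (rule dvd_add[OF dvd_add[OF dvd_mult[OF E_dvd] dvd_mult[OF D1(1)]] dvd_mult2[OF D1(2)]])
  have "[d^2 + a^2 - 1 = d0^2 + a0^2 - 1] (mod P)"
    unfolding a_def d_def by (intro cong_diff cong_add cong_pow cong_refl) simp_all
  then have "P dvd (d^2 + a^2 - 1) - (d0^2 + a0^2 - 1)" by (simp only: cong_dvd)
  from dvd_add[OF this dd0] have "P dvd d^2 + a^2 - 1" by (simp only: diff_add_cancel)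
  moreover have "d^2 - (1 - a^2) = d^2 + a^2 - 1" by simp
  ultimately have "P dvd d^2 - (1 - a^2)" by (simp only:)
  then have "(a, d) \<in> C" unfolding C_def R_def a_def d_def using F_mod by (simp add: cong_dvd)
  moreover have "psi (a, d) = s"
  proof -
    have e4: "a0 + ii*d0 - s = s*(2*h-1) + (s'-s)*h*(ii^2+1)"
      unfolding a0_def d0_def by (simp add: algebra_simps power2_eq_square power4_eq_xxxx)
    have "P dvd a0 + ii*d0 - s" unfolding e4 by (rule dvd_add[OF dvd_mult[OF D1(2)] dvd_mult[OF E_dvd]])
    moreover have "[a + ii*d = a0 + ii*d0] (mod P)"
      unfolding a_def d_def by (intro cong_add cong_mult cong_refl) simp_all
    ultimately have "[a + ii*d = s] (mod P)" using cong_trans by (simp only: cong_dvd[symmetric]) blast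
    then have "(a + ii*d) mod P = s mod P" by (simp add: cong_def)
    then show ?thesis using s F_mod_id Fs_mem by (simp add: psi_def)
  qed
  ultimately show ?thesis by force
qed

lemma psi_bij: "bij_betw psi C Fs"
  unfolding bij_betw_def using psi_inj psi_Fs psi_surj by blast

lemma card_C: "card C = p - 1"
  using bij_betw_same_card[OF psi_bij] card_Fs by simp

definition H where "H s t = (s^2 - t^2)*(s^2*t^2 - 1)"

lemma two_sa: assumes "(a, d) \<in> C" shows "P dvd 2*(a + ii*d)*a - (a + ii*d)^2 - 1"
proof -
  have eq_u: "2*(a + ii*d)*a - (a + ii*d)^2 - 1 = (a^2 + d^2 - 1) - (ii^2+1)*d^2"
    by (simp add: algebra_simps power2_eq_square power4_eq_xxxx)
  then show ?thesis by (subst eq_u) (rule dvd_diff[OF conjunct2[OF conjunct2[OF C_D[OF assms]]] dvd_mult2[OF E_dvd]])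
qed

lemma key: assumes u: "(a, d) \<in> C" and v: "(b, e) \<in> C"
  shows "rho (a^2 - b^2) = rho (H (psi (a,d)) (psi (b,e)))"
proof -
  define s where "s = a + ii*d"
  define t where "t = b + ii*e"
  have e5: "4*s^2*t^2*(a^2-b^2) - H s t =
     t^2*(2*s*a - s^2 - 1)*(2*s*a + s^2 + 1) - s^2*(2*t*b - t^2 - 1)*(2*t*b + t^2 + 1)"
    unfolding H_def by (simp add: algebra_simps power2_eq_square power4_eq_xxxx)
  have T1: "P dvd 2*s*a - s^2 - 1" unfolding s_def by (rule two_sa[OF u])
  have T2: "P dvd 2*t*b - t^2 - 1" unfolding t_def by (rule two_sa[OF v])
  have "P dvd 4*s^2*t^2*(a^2-b^2) - H s t" unfolding e5
    by (rule dvd_diff[OF dvd_mult2[OF dvd_mult[OF T1]] dvd_mult2[OF dvd_mult[OF T2]]])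
  then have c1: "[(2*s*t)^2*(a^2-b^2) = H s t] (mod P)"
    by (simp add: cong_dvd power_mult_distrib)
  have nd: "\<not> P dvd 2*s*t"
    using ndvd_mult[OF ndvd_mult[OF ndvd_2 s_ndvd[OF u]] s_ndvd[OF v]] by (simp add: s_def t_def)
  have "rho (a^2 - b^2) = rho ((2*s*t)^2*(a^2-b^2))" using rho_scale[OF nd] by simp
  also have "\<dots> = rho (H s t)" using c1 by (rule rho_cong)
  also have "\<dots> = rho (H (psi (a,d)) (psi (b,e)))"
    unfolding H_def psi_def s_def t_def
    by (rule rho_cong) (intro cong_diff cong_mult cong_pow cong_refl; simp)
  finally show ?thesis .
qed

definition kk where "kk x y = (x^2 * y^2 + 1) * (x^2 + y^2)"

lemma H_ii: "rho (H s ((ii*t) mod P)) = rho (kk s t)"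
proof -
  have c1: "[H s ((ii*t) mod P) = H s (ii*t)] (mod P)"
    unfolding H_def by (intro cong_diff cong_mult cong_pow cong_refl; simp)
  have e6: "H s (ii*t) - (- kk s t) = (ii^2+1)*((s^2+t^2)*s^2*t^2 + t^2*(s^2*t^2+1) - (ii^2+1)*s^2*t^4)"
    unfolding H_def kk_def by (simp add: algebra_simps power2_eq_square power4_eq_xxxx)
  have "P dvd H s (ii*t) - (- kk s t)" unfolding e6 by (rule dvd_mult2[OF E_dvd])
  then have "[H s (ii*t) = - kk s t] (mod P)" by (simp only: cong_dvd)
  with c1 have "[H s ((ii*t) mod P) = - kk s t] (mod P)" by (rule cong_trans)
  then have "rho (H s ((ii*t) mod P)) = rho (- kk s t)" by (rule rho_cong)
  then show ?thesis using rho_neg by simp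
qed

lemma G1_eq: "G1 = (\<Sum>s\<in>Fs. \<Sum>t\<in>Fs. rho (kk s t))"
proof -
  have "G1 = (\<Sum>a\<in>Fp p. rho (1 - a^2) * (\<Sum>b\<in>Fp p. rho (1 - b^2) * rho (a^2 - b^2)))"
    unfolding G1_def g_def by (simp add: sum_distrib_left algebra_simps)
  also have "\<dots> = (\<Sum>a\<in>Fp p. rho (1 - a^2) * (\<Sum>v\<in>C. rho (a^2 - (fst v)^2)))"
    by (simp add: sum_C)
  also have "\<dots> = (\<Sum>u\<in>C. \<Sum>v\<in>C. rho ((fst u)^2 - (fst v)^2))"
    by (rule sum_C)
  also have "\<dots> = (\<Sum>u\<in>C. \<Sum>v\<in>C. rho (H (psi u) (psi v)))"
    using key by (intro sum.cong refl) (metis prod.collapse)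
  also have "\<dots> = (\<Sum>u\<in>C. \<Sum>t\<in>Fs. rho (H (psi u) t))"
    by (intro sum.cong refl) (rule sum.reindex_bij_betw[OF psi_bij])
  also have "\<dots> = (\<Sum>s\<in>Fs. \<Sum>t\<in>Fs. rho (H s t))"
    by (rule sum.reindex_bij_betw[OF psi_bij, where g="\<lambda>s. \<Sum>t\<in>Fs. rho (H s t)"])
  also have "\<dots> = (\<Sum>s\<in>Fs. \<Sum>t\<in>Fs. rho (H s ((ii*t) mod P)))"
    by (rule sum.cong[OF refl], rule sum_reFs[OF ii_ndvd])
  also have "\<dots> = (\<Sum>s\<in>Fs. \<Sum>t\<in>Fs. rho (kk s t))"
    using H_ii by simp
  finally show ?thesis .
qed

lemma X_card: "card (X_points p) = (\<Sum>x\<in>Fp p. \<Sum>y\<in>Fp p. rho (kk x y))"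
proof -
  have "X_points p = Sigma (Fp p) (\<lambda>x. Sigma (Fp p) (\<lambda>y. R (kk x y)))"
    by (auto simp: X_points_def R_def kk_def)
  then have "card (X_points p) = (\<Sum>x\<in>Fp p. card (Sigma (Fp p) (\<lambda>y. R (kk x y))))"
    using card_SigmaI fin_F fin_R by (simp add: finite_SigmaI)
  also have "\<dots> = (\<Sum>x\<in>Fp p. \<Sum>y\<in>Fp p. rho (kk x y))"
    using card_SigmaI fin_F fin_R by (simp add: rho_def)
  finally show ?thesis .
qed

lemma X_decomp: "card (X_points p) = 1 + 2*(p-1) + 2*(p-1) + G1"
proof -
  have "card (X_points p) = (\<Sum>y\<in>Fp p. rho (kk 0 y)) + (\<Sum>x\<in>Fs. \<Sum>y\<in>Fp p. rho (kk x y))"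
    unfolding X_card by (rule sum_F_split)
  also have "(\<Sum>y\<in>Fp p. rho (kk 0 y)) = rho (kk 0 0) + (\<Sum>y\<in>Fs. rho (kk 0 y))" by (rule sum_F_split)
  also have "(\<Sum>y\<in>Fs. rho (kk 0 y)) = (\<Sum>y\<in>Fs. 2)" by (rule sum.cong) (simp_all add: kk_def rho_sqF)
  also have "(\<Sum>x\<in>Fs. \<Sum>y\<in>Fp p. rho (kk x y)) = (\<Sum>x\<in>Fs. 2 + (\<Sum>y\<in>Fs. rho (kk x y)))"
  proof (rule sum.cong[OF refl])
    fix x assume x: "x \<in> Fs"
    have "(\<Sum>y\<in>Fp p. rho (kk x y)) = rho (kk x 0) + (\<Sum>y\<in>Fs. rho (kk x y))" by (rule sum_F_split)
    then show "(\<Sum>y\<in>Fp p. rho (kk x y)) = 2 + (\<Sum>y\<in>Fs. rho (kk x y))" using x rho_sqF by (simp add: kk_def)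
  qed
  also have "(\<Sum>x\<in>Fs. 2 + (\<Sum>y\<in>Fs. rho (kk x y))) = (\<Sum>x\<in>Fs. 2) + G1"
    unfolding G1_eq by (rule sum.distrib)
  finally show ?thesis using card_Fs by (simp add: kk_def rho0)
qed

lemma G2_val: "G2 = 4*(p-1) - 4"
proof -
  have "card C = rho (1 - 0^2) + (\<Sum>b\<in>Fs. rho (1 - b^2))" unfolding card_C_sum by (rule sum_F_split)
  then have "(\<Sum>b\<in>Fs. rho (1 - b^2)) = p - 3" using card_C rho1 by simp
  then show ?thesis using G2_eq p_ge5 by simp
qed

definition Full where "Full = {v. length v = 6 \<and> set v \<subseteq> Fp p \<and>
      [v!1^2 - v!2^2 = v!3^2] (mod P) \<and>
      [v!0^2 - v!1^2 = v!4^2] (mod P) \<and>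
      [v!0^2 - v!2^2 = v!5^2] (mod P)}"

lemma cone_eq: "S_affine_cone p = Full - {replicate 6 0}"
  by (auto simp: S_affine_cone_def Full_def)

lemma zero_Full: "replicate 6 0 \<in> Full"
  using zero_F by (auto simp: Full_def numeral_eq_Suc)

lemma len6: "length v = 6 \<Longrightarrow> v = [v!0, v!1, v!2, v!3, v!4, v!5]"
  by (auto simp: list_eq_iff_nth_eq nth_Cons' less_Suc_eq numeral_eq_Suc)

definition T where "T = Sigma (Fp p) (\<lambda>x0. Sigma (Fp p) (\<lambda>x1. Sigma (Fp p) (\<lambda>x2.
   R (x1^2 - x2^2) \<times> (R (x0^2 - x1^2) \<times> R (x0^2 - x2^2)))))"

definition L :: "int \<times> int \<times> int \<times> int \<times> int \<times> int \<Rightarrow> int list" where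
  "L = (\<lambda>(x0,x1,x2,x3,x4,x5). [x0,x1,x2,x3,x4,x5])"

lemma inj_L: "inj L" by (rule injI) (auto simp: L_def split: prod.splits)

lemma Full_img: "Full = L ` T"
proof
  show "L ` T \<subseteq> Full"
    by (auto simp: L_def T_def R_def Full_def cong_sym_eq)
  show "Full \<subseteq> L ` T"
  proof
    fix v assume v: "v \<in> Full"
    then have l: "length v = 6" by (simp add: Full_def)
    have ent: "\<And>i. i < 6 \<Longrightarrow> v!i \<in> Fp p" using v l nth_mem by (fastforce simp: Full_def)
    have "(v!0, v!1, v!2, v!3, v!4, v!5) \<in> T"
      using v ent by (auto simp: T_def R_def Full_def cong_sym_eq)
    moreover have "v = L (v!0, v!1, v!2, v!3, v!4, v!5)" using len6[OF l] by (simp add: L_def)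
    ultimately show "v \<in> L ` T" by blast
  qed
qed

lemma card_Full: "card Full = N"
proof -
  have "card Full = card T" unfolding Full_img by (rule card_image) (meson inj_L inj_on_subset subset_UNIV)
  also have "\<dots> = N"
    unfolding T_def N_def g_def using fin_F fin_R
    by (simp add: card_SigmaI finite_SigmaI card_cartesian_product rho_def mult.assoc)
  finally show ?thesis .
qed

lemma fin_Full: "finite Full"
proof -
  have "Full \<subseteq> {xs. set xs \<subseteq> Fp p \<and> length xs = 6}" by (auto simp: Full_def)
  then show ?thesis using finite_lists_length_eq[OF fin_F] finite_subset by blast
qed

lemma card_cone: "card (S_affine_cone p) = N - 1"
  using cone_eq zero_Full fin_Full card_Full by (simp add: card_Diff_singleton)

lemma fin_cone: "finite (S_affine_cone p)" using cone_eq fin_Full by simp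

lemma scale_len: "length (scale_vec p c v) = length v" by (simp add: scale_vec_def)
lemma scale_nth: "i < length v \<Longrightarrow> scale_vec p c v ! i = (c * v!i) mod P" by (simp add: scale_vec_def)
lemma scale_set: "set (scale_vec p c v) \<subseteq> Fp p" using F_mod by (auto simp: scale_vec_def)

lemma cong_sc: assumes "[a^2 - b^2 = e^2] (mod P)"
  shows "[((c*a) mod P)^2 - ((c*b) mod P)^2 = ((c*e) mod P)^2] (mod P)"
proof -
  have "[((c*a) mod P)^2 - ((c*b) mod P)^2 = (c*a)^2 - (c*b)^2] (mod P)"
    by (intro cong_diff cong_pow) simp_all
  also have "(c*a)^2 - (c*b)^2 = c^2 * (a^2 - b^2)" by (simp add: power_mult_distrib algebra_simps)
  also have "[c^2 * (a^2 - b^2) = c^2 * e^2] (mod P)" using assms by (intro cong_mult cong_refl)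
  also have "c^2 * e^2 = (c*e)^2" by (simp add: power_mult_distrib)
  also have "[(c*e)^2 = ((c*e) mod P)^2] (mod P)" by (intro cong_pow) (simp add: cong_sym_eq)
  finally show ?thesis .
qed

lemma scale_cone: assumes v: "v \<in> S_affine_cone p" and c: "c \<in> Fs"
  shows "scale_vec p c v \<in> S_affine_cone p"
proof -
  have l: "length v = 6" using v by (simp add: S_affine_cone_def)
  have ent: "\<And>i. i < 6 \<Longrightarrow> v!i \<in> Fp p" using v l nth_mem by (fastforce simp: S_affine_cone_def)
  have nz: "scale_vec p c v \<noteq> replicate 6 0"
  proof
    assume z: "scale_vec p c v = replicate 6 0"
    have "\<And>i. i < 6 \<Longrightarrow> v!i = 0"
    proof -
      fix i :: nat assume i: "i < 6"
      have "(c * v!i) mod P = 0" using arg_cong[OF z, of "\<lambda>xs. xs!i"] scale_nth[of i v c] l i by simp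
      then have "P dvd c * v!i" by auto
      then have "P dvd v!i" using Fs_ndvd[OF c] prime_dvd_mult_iff[OF primeP] by blast
      then show "v!i = 0" using F_dvd ent i by blast
    qed
    then have "v = replicate 6 0" using l by (simp add: list_eq_iff_nth_eq)
    then show False using v by (simp add: S_affine_cone_def)
  qed
  have c1: "[v!1^2 - v!2^2 = v!3^2] (mod P)" "[v!0^2 - v!1^2 = v!4^2] (mod P)" "[v!0^2 - v!2^2 = v!5^2] (mod P)"
    using v by (simp_all add: S_affine_cone_def)
  show ?thesis using nz scale_set l cong_sc[OF c1(1), of c] cong_sc[OF c1(2), of c] cong_sc[OF c1(3), of c]
    by (simp add: S_affine_cone_def scale_len scale_nth)
qed

lemma class_alt: "proj_class p v = (\<lambda>c. scale_vec p c v) ` Fs"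
  by (auto simp: proj_class_def Fs_def)

lemma scale_one: "set v \<subseteq> Fp p \<Longrightarrow> scale_vec p 1 v = v"
  unfolding scale_vec_def by (rule map_idI) (auto simp: F_mod_id)

lemma one_Fs: "1 \<in> Fs" using p_ge5 by (simp add: Fs_mem F_mem)

lemma self_in: "v \<in> S_affine_cone p \<Longrightarrow> v \<in> proj_class p v"
  unfolding class_alt using scale_one one_Fs by (force simp: S_affine_cone_def)

lemma scale_comp: "scale_vec p c (scale_vec p d v) = scale_vec p ((c*d) mod P) v"
  by (simp add: scale_vec_def mod_mult_right_eq mod_mult_left_eq mult.assoc)

lemma scale_modc: "scale_vec p (c mod P) v = scale_vec p c v"
  by (simp add: scale_vec_def mod_mult_left_eq)

lemma mulFs: "d \<in> Fs \<Longrightarrow> c \<in> Fs \<Longrightarrow> (d*c) mod P \<in> Fs"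
  using mul_img_Fs[OF Fs_ndvd] by blast

lemma class_eq: assumes v: "v \<in> S_affine_cone p" and w: "w \<in> proj_class p v"
  shows "proj_class p w = proj_class p v"
proof -
  obtain c where c: "c \<in> Fs" "w = scale_vec p c v" using w class_alt by auto
  obtain c' where c': "[c*c' = 1] (mod P)" using inv_ex Fs_ndvd[OF c(1)] by blast
  have c'nd: "\<not> P dvd c'"
  proof
    assume "P dvd c'"
    then have "P dvd c*c'" by simp
    then have "[c*c' = 0] (mod P)" by (simp add: cong_0_iff)
    then have "[1 = 0] (mod P)" using c' by (metis cong_sym cong_trans)
    then show False using p_ge5 by (simp add: cong_iff_dvd_diff)
  qed
  have c''F: "c' mod P \<in> Fs" using c'nd F_mod Fs_mem by auto
  show ?thesis
  proof
    show "proj_class p w \<subseteq> proj_class p v"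
    proof
      fix x assume "x \<in> proj_class p w"
      then obtain d where d: "d \<in> Fs" "x = scale_vec p d w" using class_alt by auto
      then have "x = scale_vec p ((d*c) mod P) v" using c scale_comp by simp
      then show "x \<in> proj_class p v" using mulFs[OF d(1) c(1)] class_alt by auto
    qed
    show "proj_class p v \<subseteq> proj_class p w"
    proof
      fix x assume "x \<in> proj_class p v"
      then obtain d where d: "d \<in> Fs" "x = scale_vec p d v" using class_alt by auto
      define e where "e = (d * (c' mod P)) mod P"
      have e: "e \<in> Fs" using mulFs[OF d(1) c''F] e_def by simp
      have "[e*c = d * (c*c')] (mod P)"
        unfolding e_def
      proof -
        have "[(d * (c' mod P)) mod P * c = d * c' * c] (mod P)"
          by (intro cong_mult cong_refl) (simp add: cong_sym_eq mod_mult_right_eq)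
        then show "[(d * (c' mod P)) mod P * c = d * (c*c')] (mod P)" by (simp add: mult_ac)
      qed
      also have "[d * (c*c') = d * 1] (mod P)" using c' by (intro cong_mult cong_refl)
      finally have "(e*c) mod P = d mod P" by (simp add: cong_def)
      then have "scale_vec p e w = x" using c d scale_comp scale_modc by metis
      then show "x \<in> proj_class p w" using e class_alt by auto
    qed
  qed
qed

lemma card_class: assumes v: "v \<in> S_affine_cone p" shows "card (proj_class p v) = p - 1"
proof -
  have l: "length v = 6" using v by (simp add: S_affine_cone_def)
  have ent: "\<And>i. i < 6 \<Longrightarrow> v!i \<in> Fp p" using v l nth_mem by (fastforce simp: S_affine_cone_def)
  have "\<exists>i<6. v!i \<noteq> 0"
  proof (rule ccontr)
    assume "\<not> ?thesis"
    then have "\<forall>i<6. v!i = 0" by simp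
    then have "v = replicate 6 0" using l by (simp add: list_eq_iff_nth_eq)
    then show False using v by (simp add: S_affine_cone_def)
  qed
  then obtain i where i: "i < 6" "v!i \<noteq> 0" by blast
  have nd: "\<not> P dvd v!i" using F_dvd ent i by blast
  have "inj_on (\<lambda>c. scale_vec p c v) Fs"
  proof (rule inj_onI)
    fix c d assume cd: "c \<in> Fs" "d \<in> Fs" "scale_vec p c v = scale_vec p d v"
    then have "scale_vec p c v ! i = scale_vec p d v ! i" by simp
    then have "(c * v!i) mod P = (d * v!i) mod P" using scale_nth[of i v] l i by simp
    then have "[c * v!i = d * v!i] (mod P)" by (simp add: cong_def)
    then have "[c = d] (mod P)" using cong_mult_rcancel coprimeP[OF nd] by blast
    then show "c = d" using F_eq cd Fs_mem by blast
  qed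
  then have "card ((\<lambda>c. scale_vec p c v) ` Fs) = card Fs" by (rule card_image)
  then show ?thesis using class_alt card_Fs by simp
qed

lemma partition: "(p - 1) * card (S_points p) = card (S_affine_cone p)"
proof -
  have U: "\<Union> (S_points p) = S_affine_cone p"
  proof
    show "\<Union> (S_points p) \<subseteq> S_affine_cone p"
    proof
      fix x assume "x \<in> \<Union> (S_points p)"
      then obtain v where v: "v \<in> S_affine_cone p" "x \<in> proj_class p v" unfolding S_points_def by blast
      then obtain c where "c \<in> Fs" "x = scale_vec p c v" using class_alt by auto
      then show "x \<in> S_affine_cone p" using scale_cone v(1) by simp
    qed
    show "S_affine_cone p \<subseteq> \<Union> (S_points p)"
    proof
      fix v assume "v \<in> S_affine_cone p"
      then have "v \<in> proj_class p v" "proj_class p v \<in> S_points p" using self_in S_points_def by auto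
      then show "v \<in> \<Union> (S_points p)" by blast
    qed
  qed
  show ?thesis
  proof -
    have "(p - 1) * card (S_points p) = card (\<Union> (S_points p))"
    proof (rule card_partition)
      show "finite (S_points p)" unfolding S_points_def using fin_cone by simp
      show "finite (\<Union> (S_points p))" using U fin_cone by simp
      show "\<And>c. c \<in> S_points p \<Longrightarrow> card c = p - 1" unfolding S_points_def using card_class by auto
      show "\<And>c1 c2. c1 \<in> S_points p \<Longrightarrow> c2 \<in> S_points p \<Longrightarrow> c1 \<noteq> c2 \<Longrightarrow> c1 \<inter> c2 = {}"
      proof -
        fix c1 c2 assume h: "c1 \<in> S_points p" "c2 \<in> S_points p" "c1 \<noteq> c2"
        then obtain u v where uv: "u \<in> S_affine_cone p" "v \<in> S_affine_cone p" "c1 = proj_class p u" "c2 = proj_class p v"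
          unfolding S_points_def by blast
        show "c1 \<inter> c2 = {}"
        proof (rule ccontr)
          assume "c1 \<inter> c2 \<noteq> {}"
          then obtain w where w: "w \<in> c1" "w \<in> c2" by blast
          have "proj_class p w = c1" using class_eq[OF uv(1)] w(1) uv(3) by simp
          moreover have "proj_class p w = c2" using class_eq[OF uv(2)] w(2) uv(4) by simp
          ultimately have "c1 = c2" by simp
          then show False using h by simp
        qed
      qed
    qed
    then show ?thesis using U by simp
  qed
qed

lemma main: "int (card (S_points p)) = int (card (X_points p)) - 1"
proof -
  define q where "q = int (p - 1)"
  have qpos: "q > 0" using p_ge5 by (simp add: q_def)
  have N1: "N \<ge> 1" using N_decomp by simp
  have "int ((p - 1) * card (S_points p)) = int (N - 1)" using partition card_cone by simp
  then have e1: "q * int (card (S_points p)) = int N - 1" using N1 by (simp add: q_def of_nat_diff)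
  have e2: "int N = 1 + q*4 + q * int G2 + q * int G1" using N_decomp by (simp add: q_def)
  have e3: "int G2 = 4*q - 4" using G2_val p_ge5 by (simp add: q_def of_nat_diff)
  have e4: "int (card (X_points p)) = 1 + 4*q + int G1" using X_decomp by (simp add: q_def)
  have "q * int (card (S_points p)) = q * (int (card (X_points p)) - 1)"
    using e1 e2 e3 e4 by (simp add: algebra_simps)
  then show ?thesis using qpos by simp
qed

end

theorem lemma4p4:
  fixes p :: nat
  assumes "prime p" and "p mod 4 = 1"
  shows "int (card (S_points p)) = int (card (X_points p)) - 1"
proof -
  interpret pc p using assms by unfold_locales
  show ?thesis by (rule main)
qed

end
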